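(* Let $T\subset\mathbb{Z}_p$ be a finite set with at least two elements, let $\mu_T=\sum_{t\in T}\delta_t$, and let $\gamma_T=\max_{t,t'\in T,\,t\neq t'}\{-\log_p|t-t'|_p\}$. Then $\widehat{\mu_T}(\xi)\neq 0$ for every $\xi\in\mathbb{Q}_p$ with $\xi\notin B(0,p^{\gamma_T+1})$, i.e. with $|\xi|_p>p^{\gamma_T+1}$.
   Context: $\mathbb{Q}_p$ is the field of $p$-adic numbers ($p$ prime) with absolute value $|\cdot|_p$ and $\mathbb{Z}_p$ its ring of integers; $B(0,p^n)=p^{-n}\mathbb{Z}_p=\{x:|x|_p\le p^n\}$. $\delta_t$ is the Dirac measure at $t$. For $x=\sum_{n\ge v}a_np^n$ ($a_n\in\{0,\dots,p-1\}$) its fractional part is $\{x\}=\sum_{n=v}^{-1}a_np^n$; $\chi(x)=e^{2\pi i\{x\}}$, $\chi_y(x)=\chi(yx)$. The Fourier transform of a finite Borel measure $\mu$ is $\widehat\mu(y)=\int\overline{\chi_y(x)}\,d\mu(x)$, so $\widehat{\mu_T}(\xi)=\sum_{t\in T}e^{-2\pi i\{t\xi\}}$. *)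

theory Defs
  imports Complex_Main "HOL-Computational_Algebra.Primes"
begin

text \<open>p-adic integers as the inverse limit of Z/p^n Z: an element x of Z_p is the
compatible sequence of its residues x n \<in> {0..<p^n} (x n = x mod p^n).\<close>
definition Zp :: "nat \<Rightarrow> (nat \<Rightarrow> int) set" where
  "Zp p = {x. \<forall>n. 0 \<le> x n \<and> x n < int p ^ n \<and> x (Suc n) mod (int p ^ n) = x n}"

definition zp_mult :: "nat \<Rightarrow> (nat \<Rightarrow> int) \<Rightarrow> (nat \<Rightarrow> int) \<Rightarrow> (nat \<Rightarrow> int)" where
  "zp_mult p x y = (\<lambda>n. (x n * y n) mod (int p ^ n))"

definition zp_diff :: "nat \<Rightarrow> (nat \<Rightarrow> int) \<Rightarrow> (nat \<Rightarrow> int) \<Rightarrow> (nat \<Rightarrow> int)" where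
  "zp_diff p x y = (\<lambda>n. (x n - y n) mod (int p ^ n))"

text \<open>p-adic valuation of a nonzero element of Z_p: the largest n with p^n dividing x,
 i.e. the least n with x mod p^(n+1) \<noteq> 0.\<close>
definition zp_val :: "nat \<Rightarrow> (nat \<Rightarrow> int) \<Rightarrow> nat" where
  "zp_val p x = (LEAST n. x (Suc n) \<noteq> 0)"

text \<open>Q_p = Z_p[1/p]: a pair (k, w) with w \<in> Z_p represents the p-adic number p^(-k) * w.
 Every element of Q_p has such representations.\<close>
definition Qp :: "nat \<Rightarrow> (nat \<times> (nat \<Rightarrow> int)) set" where
  "Qp p = {(k, w). w \<in> Zp p}"

definition qp_abs :: "nat \<Rightarrow> nat \<times> (nat \<Rightarrow> int) \<Rightarrow> real" where
  "qp_abs p \<xi> = (case \<xi> of (k, w) \<Rightarrow>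
      if w = (\<lambda>_. 0) then 0 else real p powr (real k - real (zp_val p w)))"

definition qp_frac :: "nat \<Rightarrow> nat \<times> (nat \<Rightarrow> int) \<Rightarrow> real" where
  "qp_frac p \<xi> = (case \<xi> of (k, w) \<Rightarrow> real_of_int (w k) / real p ^ k)"

definition zp_qp_mult :: "nat \<Rightarrow> (nat \<Rightarrow> int) \<Rightarrow> nat \<times> (nat \<Rightarrow> int) \<Rightarrow> nat \<times> (nat \<Rightarrow> int)" where
  "zp_qp_mult p t \<xi> = (case \<xi> of (k, w) \<Rightarrow> (k, zp_mult p t w))"

definition padic_chi :: "nat \<Rightarrow> nat \<times> (nat \<Rightarrow> int) \<Rightarrow> complex" where
  "padic_chi p \<xi> = exp (2 * of_real pi * \<i> * of_real (qp_frac p \<xi>))"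

definition fourier_muT :: "nat \<Rightarrow> (nat \<Rightarrow> int) set \<Rightarrow> nat \<times> (nat \<Rightarrow> int) \<Rightarrow> complex" where
  "fourier_muT p T \<xi> = (\<Sum>t\<in>T. cnj (padic_chi p (zp_qp_mult p t \<xi>)))"

definition gammaT :: "nat \<Rightarrow> (nat \<Rightarrow> int) set \<Rightarrow> nat" where
  "gammaT p T = Max {zp_val p (zp_diff p t t') | t t'. t \<in> T \<and> t' \<in> T \<and> t \<noteq> t'}"

end

theory Submission imports Defs "Berlekamp_Zassenhaus.Factor_Bound" "HOL-Analysis.Analysis" begin

lemma frob_int_poly:
  fixes u v :: "int poly"
  assumes p: "prime p"
  shows "\<exists>W. (u + v) ^ p = u ^ p + v ^ p + smult (int p) W"
proof -
  have p1: "p > 1" using p prime_gt_1_nat by blast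
  have "(u + v) ^ p = (\<Sum>k\<le>p. of_nat (p choose k) * u ^ k * v ^ (p - k))"
    by (rule binomial_ring)
  also have "{..p} = insert p (insert 0 {1..<p})" using p1 by auto
  also have "(\<Sum>k\<in>insert p (insert 0 {1..<p}). of_nat (p choose k) * u ^ k * v ^ (p - k))
     = u ^ p + v ^ p + (\<Sum>k\<in>{1..<p}. of_nat (p choose k) * u ^ k * v ^ (p - k))"
    using p1 by (simp add: sum.insert)
  also have "(\<Sum>k\<in>{1..<p}. of_nat (p choose k) * u ^ k * v ^ (p - k))
     = smult (int p) (\<Sum>k\<in>{1..<p}. of_nat ((p choose k) div p) * u ^ k * v ^ (p - k))"
  proof -
    have "\<And>k. k \<in> {1..<p} \<Longrightarrow> (of_nat (p choose k) :: int poly) = smult (int p) (of_nat ((p choose k) div p))"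
    proof -
      fix k assume k: "k \<in> {1..<p}"
      have "p dvd (p choose k)" using dvd_choose_prime[of k p] k p p1 by auto
      hence "p choose k = p * ((p choose k) div p)" by simp
      hence "(of_nat (p choose k) :: int poly) = of_nat p * of_nat ((p choose k) div p)"
        by (metis of_nat_mult)
      thus "(of_nat (p choose k) :: int poly) = smult (int p) (of_nat ((p choose k) div p))"
        by (simp add: of_nat_mult_conv_smult)
    qed
    thus ?thesis by (simp add: smult_sum2 mult.assoc)
  qed
  finally show ?thesis by blast
qed

lemma binom_pow_mod:
  assumes p: "prime p"
  shows "\<exists>R. ([:1,1:] :: int poly) ^ (p ^ j) = monom 1 (p ^ j) + 1 + smult (int p) R"
proof (induction j)
  case 0
  have "([:1,1:] :: int poly) = monom 1 1 + 1"
    by (auto simp: poly_eq_iff coeff_monom coeff_pCons split: nat.split)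
  thus ?case by (intro exI[of _ 0]) simp
next
  case (Suc j)
  then obtain R where R: "([:1,1:] :: int poly) ^ (p ^ j) = monom 1 (p ^ j) + 1 + smult (int p) R" by blast
  have p1: "p > 0" using p prime_gt_0_nat by blast
  have "([:1,1:] :: int poly) ^ (p ^ Suc j) = (([:1,1:] :: int poly) ^ (p ^ j)) ^ p"
    by (simp only: power_Suc2 power_mult)
  also have "\<dots> = (monom 1 (p ^ j) + (1 + smult (int p) R)) ^ p" by (simp only: R add.assoc)
  finally have e1: "([:1,1:] :: int poly) ^ (p ^ Suc j) = (monom 1 (p ^ j) + (1 + smult (int p) R)) ^ p" .
  obtain W1 where W1: "(monom 1 (p ^ j) + (1 + smult (int p) R)) ^ p
      = (monom 1 (p ^ j)) ^ p + (1 + smult (int p) R) ^ p + smult (int p) W1"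
    using frob_int_poly[OF p] by blast
  obtain W2 where W2: "(1 + smult (int p) R) ^ p = 1 ^ p + (smult (int p) R) ^ p + smult (int p) W2"
    using frob_int_poly[OF p] by blast
  have m: "(monom (1::int) (p ^ j)) ^ p = monom 1 (p ^ Suc j)"
    by (simp only: monom_power power_Suc2 power_one)
  have s: "(smult (int p) R) ^ p = smult (int p) (smult (int p ^ (p - 1)) (R ^ p))"
  proof -
    obtain m where m: "p = Suc m" using p1 by (cases p) auto
    have "int p ^ p = int p * int p ^ (p - 1)" unfolding m diff_Suc_1 by (rule power_Suc)
    thus ?thesis by (simp only: smult_power smult_smult)
  qed
  have "([:1,1:] :: int poly) ^ (p ^ Suc j) = monom 1 (p ^ Suc j) + (1 + smult (int p) (smult (int p ^ (p - 1)) (R ^ p)) + smult (int p) W2) + smult (int p) W1"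
    unfolding e1 W1 W2 m s by simp
  also have "\<dots> = monom 1 (p ^ Suc j) + 1 + smult (int p) (smult (int p ^ (p - 1)) (R ^ p) + W2 + W1)"
    by (simp only: smult_add_right add_ac)
  finally show ?case by blast
qed

lemma eisenstein_aux:
  fixes A B :: "int poly"
  assumes p: "prime (q::int)"
    and c0: "q dvd coeff A 0" "\<not> q dvd coeff B 0"
    and ci: "\<forall>i<degree (A * B). q dvd coeff (A * B) i"
    and cl: "\<not> q dvd lead_coeff (A * B)"
  shows "degree B = 0"
proof (rule ccontr)
  assume dB: "degree B \<noteq> 0"
  have A0: "A \<noteq> 0" and B0: "B \<noteq> 0" using cl by auto
  have lc: "lead_coeff (A * B) = lead_coeff A * lead_coeff B" by (rule lead_coeff_mult)
  have nlA: "\<not> q dvd lead_coeff A" using cl lc by auto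
  define k where "k = (LEAST i. \<not> q dvd coeff A i)"
  have k1: "\<not> q dvd coeff A k" unfolding k_def by (rule LeastI[of _ "degree A"]) (rule nlA)
  have k2: "k \<le> degree A" unfolding k_def by (rule Least_le) (rule nlA)
  have k3: "\<And>i. i < k \<Longrightarrow> q dvd coeff A i" unfolding k_def using not_less_Least by blast
  have dAB: "degree (A * B) = degree A + degree B" using A0 B0 by (rule degree_mult_eq)
  have "k < degree (A * B)" using k2 dAB dB by auto
  hence "q dvd coeff (A * B) k" using ci by auto
  moreover have "coeff (A * B) k = coeff A k * coeff B 0 + (\<Sum>i<k. coeff A i * coeff B (k - i))"
  proof -
    have "{..k} = insert k {..<k}" by auto
    thus ?thesis by (simp add: coeff_mult sum.insert)
  qed
  moreover have "q dvd (\<Sum>i<k. coeff A i * coeff B (k - i))"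
    by (rule dvd_sum) (simp add: k3)
  ultimately have "q dvd coeff A k * coeff B 0" by (metis dvd_add_left_iff)
  hence "q dvd coeff A k \<or> q dvd coeff B 0" using p by (simp add: prime_dvd_mult_iff)
  thus False using k1 c0 by auto
qed

lemma eisenstein:
  fixes A B :: "int poly"
  assumes p: "prime (q::int)"
    and c0: "coeff (A * B) 0 = q"
    and ci: "\<forall>i<degree (A * B). q dvd coeff (A * B) i"
    and cl: "\<not> q dvd lead_coeff (A * B)"
  shows "degree A = 0 \<or> degree B = 0"
proof -
  have e: "coeff A 0 * coeff B 0 = q" using c0 by (simp add: coeff_mult)
  hence d: "q dvd coeff A 0 \<or> q dvd coeff B 0" using p by (metis dvd_refl prime_dvd_mult_iff)
  have nd: "\<not> (q dvd coeff A 0 \<and> q dvd coeff B 0)"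
  proof
    assume "q dvd coeff A 0 \<and> q dvd coeff B 0"
    hence "q * q dvd q" using e by (metis mult_dvd_mono)
    hence "q dvd 1" using p by (metis dvd_times_left_cancel_iff mult.right_neutral not_prime_0)
    thus False using p not_prime_unit by blast
  qed
  show ?thesis
  proof (cases "q dvd coeff A 0")
    case True
    hence "degree B = 0" using eisenstein_aux[OF p True _ ci cl] nd by auto
    thus ?thesis by simp
  next
    case False
    hence "q dvd coeff B 0" using d by auto
    hence "degree A = 0" using eisenstein_aux[OF p, of B A] ci cl False by (simp add: mult.commute)
    thus ?thesis by simp
  qed
qed



definition cyc :: "nat \<Rightarrow> nat \<Rightarrow> 'a::comm_ring_1 poly" where
  "cyc p N = (\<Sum>j<p. monom 1 N ^ j)"

lemma cyc_mult: "cyc p N * (monom 1 N - 1) = monom 1 (p * N) - 1"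
proof -
  have "monom (1::'a) N ^ p - 1 = (monom 1 N - 1) * cyc p N"
    unfolding cyc_def by (rule power_diff_1_eq)
  moreover have "monom (1::'a) N ^ p = monom 1 (p * N)" by (simp add: monom_power mult.commute)
  ultimately show ?thesis by (simp add: mult.commute)
qed

lemma degree_monom_minus_1:
  assumes "N > 0"
  shows "degree (monom (1::'a::idom) N - 1) = N"
proof -
  have m1: "- (1::'a poly) = [:-1:]" by (metis minus_pCons minus_zero pCons_one)
  have "monom (1::'a) N - 1 = monom 1 N + [:-1:]" by (simp only: diff_conv_add_uminus m1)
  also have "degree \<dots> = N"
    using assms by (subst degree_add_eq_left) (simp_all add: degree_monom_eq)
  finally show ?thesis .
qed

lemma degree_cyc:
  assumes "p > 0" "N > 0"
  shows "degree (cyc p N :: 'a::idom poly) = (p - 1) * N"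
proof -
  have ne: "monom (1::'a) N - 1 \<noteq> 0" using degree_monom_minus_1[OF assms(2), where 'a='a] assms(2) by auto
  have "monom (1::'a) (p * N) - 1 \<noteq> 0" using degree_monom_minus_1[of "p*N", where 'a='a] assms by auto
  hence c0: "cyc p N \<noteq> (0::'a poly)" using cyc_mult[of p N] by (metis mult_zero_left)
  have "degree (cyc p N * (monom (1::'a) N - 1)) = degree (cyc p N :: 'a poly) + N"
    using degree_mult_eq[OF c0 ne] degree_monom_minus_1[OF assms(2), where 'a='a] by simp
  moreover have "degree (monom (1::'a) (p * N) - 1) = p * N"
    using degree_monom_minus_1[of "p*N", where 'a='a] assms by auto
  ultimately have "degree (cyc p N :: 'a poly) + N = p * N" using cyc_mult[of p N, where 'a='a] by metis
  thus ?thesis by (simp add: diff_mult_distrib)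
qed

lemma cyc_int_rat: "of_int_poly (cyc p N) = (cyc p N :: rat poly)"
  by (simp add: cyc_def hom_distribs)

lemma poly_cyc_1: "poly (cyc p N) (1::'a::comm_ring_1) = of_nat p"
  by (simp add: cyc_def poly_sum poly_monom)

lemma pcompose_monom1: "pcompose (monom (1::'a::comm_ring_1) N) q = q ^ N"
proof -
  have "monom (1::'a) N = monom 1 1 ^ N" by (simp add: monom_power)
  moreover have "pcompose (monom (1::'a) 1) q = q" by (simp add: monom_Suc pcompose_pCons)
  ultimately show ?thesis by (simp add: pcompose_hom.hom_power)
qed

lemma psi_props:
  fixes n :: nat
  assumes p: "prime p"
  defines "\<Psi> \<equiv> pcompose (cyc p (p ^ n) :: int poly) [:1,1:]"
  shows "coeff \<Psi> 0 = int p" "\<forall>i<degree \<Psi>. int p dvd coeff \<Psi> i" "\<not> int p dvd lead_coeff \<Psi>"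
proof -
  define N where "N = p ^ n"
  have p0: "p > 0" using p prime_gt_0_nat by blast
  have p1: "p > 1" using p prime_gt_1_nat by blast
  have N0: "N > 0" unfolding N_def using p0 by simp
  define E where "E = ([:1,1:] :: int poly) ^ N"
  have psi: "\<Psi> = (\<Sum>j<p. E ^ j)"
    unfolding \<Psi>_def N_def[symmetric] E_def cyc_def
    by (simp add: pcompose_sum pcompose_hom.hom_power pcompose_monom1)
  obtain R1 where R1: "E = monom 1 N + 1 + smult (int p) R1"
    unfolding E_def N_def using binom_pow_mod[OF p, of n] by blast
  obtain R2 where R2: "E ^ p = monom 1 (p * N) + 1 + smult (int p) R2"
  proof -
    obtain R2 where "([:1,1:] :: int poly) ^ (p ^ Suc n) = monom 1 (p ^ Suc n) + 1 + smult (int p) R2"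
      using binom_pow_mod[OF p, of "Suc n"] by blast
    moreover have "E ^ p = ([:1,1:] :: int poly) ^ (p ^ Suc n)"
      unfolding E_def N_def by (simp only: power_Suc2 power_mult)
    moreover have "p ^ Suc n = p * N" unfolding N_def by simp
    ultimately show ?thesis using that by metis
  qed
  have "\<Psi> * (E - 1) = E ^ p - 1" unfolding psi by (simp add: power_diff_1_eq mult.commute)
  hence "\<Psi> * (monom 1 N + smult (int p) R1) = monom 1 (p * N) + smult (int p) R2"
    using R1 R2 by (simp add: algebra_simps)
  hence key: "monom 1 N * \<Psi> = monom 1 (p * N) + smult (int p) (R2 - \<Psi> * R1)"
    by (simp add: algebra_simps smult_diff_right)
  have co: "coeff \<Psi> i = (if i + N = p * N then 1 else 0) + int p * coeff (R2 - \<Psi> * R1) (i + N)" for i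
  proof -
    have "coeff (monom 1 N * \<Psi>) (i + N) = coeff \<Psi> i" by (simp add: coeff_monom_mult)
    thus ?thesis using arg_cong[OF key, of "\<lambda>P. coeff P (i + N)"]
      by (cases "i + N = p * N") (auto simp: coeff_monom)
  qed
  have dpsi: "degree \<Psi> = (p - 1) * N"
    unfolding \<Psi>_def N_def[symmetric] using degree_cyc[OF p0 N0, where 'a=int] by (simp add: degree_pcompose)
  show "coeff \<Psi> 0 = int p"
    by (simp add: poly_0_coeff_0[symmetric] \<Psi>_def poly_pcompose poly_cyc_1)
  show "\<forall>i<degree \<Psi>. int p dvd coeff \<Psi> i"
  proof (intro allI impI)
    fix i assume "i < degree \<Psi>"
    hence "i + N \<noteq> p * N" using dpsi p1 by (auto simp: diff_mult_distrib)
    thus "int p dvd coeff \<Psi> i" using co[of i] by simp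
  qed
  show "\<not> int p dvd lead_coeff \<Psi>"
  proof
    assume d: "int p dvd lead_coeff \<Psi>"
    have "degree \<Psi> + N = p * N" using dpsi p1 by (simp add: diff_mult_distrib)
    hence "lead_coeff \<Psi> = 1 + int p * coeff (R2 - \<Psi> * R1) (degree \<Psi> + N)" using co[of "degree \<Psi>"] by simp
    hence "int p dvd 1" using d by (metis dvd_add_left_iff dvd_triv_left)
    thus False using p1 by simp
  qed
qed

lemma cyc_factor:
  assumes p: "prime p"
    and de: "(cyc p (p ^ n) :: rat poly) = d * e" and d: "degree d > 0"
  shows "degree e = 0"
proof -
  have "of_int_poly (cyc p (p ^ n) :: int poly) = d * e" using de cyc_int_rat by metis
  from rat_to_int_factor[OF this] obtain d' e' where
    f: "(cyc p (p ^ n) :: int poly) = d' * e'" "degree d' = degree d" "degree e' = degree e" by blast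
  define \<Psi> where "\<Psi> = pcompose (cyc p (p ^ n) :: int poly) [:1,1:]"
  have "\<Psi> = pcompose d' [:1,1:] * pcompose e' [:1,1:]" unfolding \<Psi>_def f(1) by (rule pcompose_mult)
  moreover note psi_props[OF p, of n, folded \<Psi>_def]
  ultimately have "degree (pcompose d' [:1,1:]) = 0 \<or> degree (pcompose e' [:1,1:]) = 0"
    using eisenstein[of "int p" "pcompose d' [:1,1:]" "pcompose e' [:1,1:]"] p by simp
  thus ?thesis using f d by (simp add: degree_pcompose)
qed


lemma cyc_complex_eval:
  "poly (map_poly of_rat (cyc p N :: rat poly)) (z::complex) = poly (cyc p N) z"
proof -
  have "map_poly of_rat (cyc p N :: rat poly) = map_poly of_rat (of_int_poly (cyc p N :: int poly))"
    by (simp add: cyc_int_rat)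
  also have "\<dots> = map_poly (of_rat \<circ> of_int) (cyc p N :: int poly)"
    by (simp add: map_poly_map_poly)
  also have "\<dots> = of_int_poly (cyc p N :: int poly)"
    by (simp add: o_def)
  also have "\<dots> = (cyc p N :: complex poly)"
    by (simp add: cyc_def hom_distribs)
  finally show ?thesis by simp
qed

lemma keyK:
  fixes A :: "nat set" and z :: complex
  assumes p: "prime p" and N: "N = p ^ n"
    and fin: "finite A" and ne: "A \<noteq> {}" and lt: "\<forall>a\<in>A. a < p * N"
    and inj: "\<forall>a\<in>A. \<forall>b\<in>A. a mod N = b mod N \<longrightarrow> a = b"
    and z1: "z ^ (p * N) = 1" and zN: "z ^ N \<noteq> 1"
  shows "(\<Sum>a\<in>A. z ^ a) \<noteq> 0"
proof
  assume S: "(\<Sum>a\<in>A. z ^ a) = 0"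
  have p0: "p > 0" using p prime_gt_0_nat by blast
  have p1: "p > 1" using p prime_gt_1_nat by blast
  have N0: "N > 0" unfolding N using p0 by simp
  define g :: "rat poly" where "g = (\<Sum>a\<in>A. monom 1 a)"
  define \<Phi> :: "rat poly" where "\<Phi> = cyc p N"
  define ev where "ev = (\<lambda>P::rat poly. poly (map_poly (of_rat :: rat \<Rightarrow> complex) P) z)"
  have ev_add: "ev (P + Q) = ev P + ev Q" for P Q unfolding ev_def by (simp add: hom_distribs)
  interpret mh: map_poly_comm_semiring_hom "of_rat :: rat \<Rightarrow> complex" ..
  have ev_mult: "ev (P * Q) = ev P * ev Q" for P Q unfolding ev_def by (simp add: mh.hom_mult)
  have ev_g: "ev g = (\<Sum>a\<in>A. z ^ a)" unfolding ev_def g_def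
    by (simp add: hom_distribs poly_sum poly_monom)
  have ev_\<Phi>: "ev \<Phi> = 0"
  proof -
    have "poly (cyc p N) z * poly (monom 1 N - 1) z = poly (monom 1 (p * N) - 1) z"
      using arg_cong[OF cyc_mult[of p N], of "\<lambda>P. poly P z"] by simp
    hence "poly (cyc p N) z * (z ^ N - 1) = 0" using z1 by (simp add: poly_monom)
    hence "poly (cyc p N) z = 0" using zN by simp
    thus ?thesis unfolding ev_def \<Phi>_def by (simp add: cyc_complex_eval)
  qed
  have \<Phi>0: "\<Phi> \<noteq> 0"
  proof
    assume "\<Phi> = 0"
    hence "poly (cyc p N) (0::rat) = 0" unfolding \<Phi>_def by simp
    moreover have "poly (cyc p N) (0::rat) = 1"
    proof -
      have "poly (cyc p N) (0::rat) = (\<Sum>j<p. (0::rat) ^ (N * j))"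
        by (simp add: cyc_def poly_sum poly_monom power_mult)
      also have "\<dots> = (\<Sum>j\<in>{0}. (0::rat) ^ (N * j))"
        using p0 N0 by (intro sum.mono_neutral_right) auto
      finally show ?thesis by simp
    qed
    ultimately show False by simp
  qed
  define d where "d = gcd \<Phi> g"
  have d0: "d \<noteq> 0" unfolding d_def using \<Phi>0 by simp
  have evd: "ev d = 0"
  proof -
    have "fst (bezout_coefficients \<Phi> g) * \<Phi> + snd (bezout_coefficients \<Phi> g) * g = d"
      unfolding d_def by (rule bezout_coefficients_fst_snd)
    hence "ev d = ev (fst (bezout_coefficients \<Phi> g)) * ev \<Phi> + ev (snd (bezout_coefficients \<Phi> g)) * ev g"
      by (metis ev_add ev_mult)
    thus ?thesis using ev_\<Phi> ev_g S by simp
  qed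
  have dd: "degree d > 0"
  proof (rule ccontr)
    assume "\<not> degree d > 0"
    hence "d = [:coeff d 0:]" by (simp add: degree_0_id)
    hence "ev d = of_rat (coeff d 0)" unfolding ev_def by (metis map_poly_pCons map_poly_0 of_rat_0 poly_pCons poly_0 mult_zero_right add.right_neutral pCons_0_0)
    moreover have "coeff d 0 \<noteq> 0" using d0 \<open>d = [:coeff d 0:]\<close> by (metis pCons_0_0)
    ultimately show False using evd by simp
  qed
  obtain e where de: "\<Phi> = d * e" unfolding d_def by (metis gcd_dvd1 dvdE)
  have e0: "degree e = 0" using cyc_factor[OF p, of n d e] de dd unfolding \<Phi>_def N by simp
  have ne0: "e \<noteq> 0" using de \<Phi>0 by auto
  define c where "c = coeff e 0"
  have c0: "c \<noteq> 0" using ne0 e0 unfolding c_def by (metis degree_0_id pCons_0_0)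
  have ec: "e = [:c:]" unfolding c_def using e0 by (simp add: degree_0_id)
  obtain f where gf: "g = d * f" unfolding d_def by (metis gcd_dvd2 dvdE)
  define q where "q = smult (inverse c) f"
  have gq: "g = \<Phi> * q"
    unfolding gf de ec q_def using c0 by (simp add: mult.commute)
  have cg: "coeff g k = (if k \<in> A then 1 else 0)" for k
    unfolding g_def coeff_sum coeff_monom using fin by (simp add: sum.delta)
  have g0: "g \<noteq> 0" using ne cg by (metis ex_in_conv one_neq_zero coeff_0)
  have q0: "q \<noteq> 0" using g0 gq by auto
  have dg: "degree g < p * N"
  proof -
    have "degree g \<le> p * N - 1"
      by (rule degree_le) (use lt cg in \<open>auto\<close>)
    moreover have "p * N > 0" using p0 N0 by simp
    ultimately show ?thesis by linarith
  qed
  have "degree g = degree \<Phi> + degree q" unfolding gq using \<Phi>0 q0 by (rule degree_mult_eq)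
  moreover have "degree \<Phi> = (p - 1) * N" unfolding \<Phi>_def by (rule degree_cyc[OF p0 N0])
  ultimately have dq: "degree q < N" using dg p1 by (simp add: diff_mult_distrib)
  have per: "coeff g (k - N) = coeff g k" if k1: "N \<le> k" and k2: "k < p * N" for k
  proof -
    have "g * (monom 1 N - 1) = q * (\<Phi> * (monom 1 N - 1))" unfolding gq by (simp only: mult_ac)
    hence eq: "g * (monom 1 N - 1) = q * (monom 1 (p * N) - 1)"
      using cyc_mult[of p N, where 'a=rat] unfolding \<Phi>_def by simp
    have e1: "g * (monom 1 N - 1) = monom 1 N * g - g" by (simp add: algebra_simps)
    have e2: "q * (monom 1 (p * N) - 1) = monom 1 (p * N) * q - q" by (simp add: algebra_simps)
    have "coeff (g * (monom 1 N - 1)) k = coeff g (k - N) - coeff g k"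
      unfolding e1 coeff_diff coeff_monom_mult using k1 by simp
    moreover have "coeff (q * (monom 1 (p * N) - 1)) k = 0"
    proof -
      have "coeff q k = 0" using dq k1 by (simp add: coeff_eq_0)
      thus ?thesis unfolding e2 coeff_diff coeff_monom_mult using k2 by simp
    qed
    ultimately show ?thesis using eq by simp
  qed
  obtain a where aA: "a \<in> A" using ne by blast
  show False
  proof (cases "N \<le> a")
    case True
    have "coeff g (a - N) = 1" using per[OF True] lt aA cg by simp
    hence "a - N \<in> A" using cg by (simp split: if_splits)
    moreover have "(a - N) mod N = a mod N" using True by (simp add: mod_if le_mod_geq)
    ultimately have "a - N = a" using inj aA by blast
    thus False using True N0 by simp
  next
    case False
    have "2 * N \<le> p * N" using p1 by (intro mult_le_mono1) simp
    hence "a + N < p * N" using False by linarith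
    hence "coeff g a = coeff g (a + N)" using per[of "a + N"] by simp
    hence "a + N \<in> A" using cg aA by (simp split: if_splits)
    moreover have "(a + N) mod N = a mod N" by simp
    ultimately have "a + N = a" using inj aA by blast
    thus False using N0 by simp
  qed
qed


lemma zp_mod:
  assumes "x \<in> Zp p" "n \<le> m"
  shows "x m mod (int p ^ n) = x n"
proof -
  have b: "\<And>n. 0 \<le> x n \<and> x n < int p ^ n \<and> x (Suc n) mod int p ^ n = x n"
    using assms(1) unfolding Zp_def by auto
  show ?thesis using assms(2)
  proof (induction m)
    case 0
    hence "n = 0" by simp
    thus ?case using b[of 0] by simp
  next
    case (Suc m)
    show ?case
    proof (cases "n = Suc m")
      case True
      thus ?thesis using b[of "Suc m"] by (simp add: mod_pos_pos_trivial)
    next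
      case False
      hence nm: "n \<le> m" using Suc.prems by simp
      have "int p ^ n dvd int p ^ m" using nm by (rule le_imp_power_dvd)
      hence "x (Suc m) mod int p ^ n = (x (Suc m) mod int p ^ m) mod int p ^ n"
        by (simp add: mod_mod_cancel)
      also have "\<dots> = x m mod int p ^ n" using b[of m] by simp
      also have "\<dots> = x n" using Suc.IH nm by simp
      finally show ?thesis .
    qed
  qed
qed

lemma zp_0:
  assumes "x \<in> Zp p" shows "x 0 = 0"
proof -
  have "\<forall>n. 0 \<le> x n \<and> x n < int p ^ n" using assms unfolding Zp_def by auto
  hence "0 \<le> x 0" "x 0 < int p ^ 0" by blast+
  hence "0 \<le> x 0" "x 0 < 1" by simp_all
  thus ?thesis by linarith
qed

lemma mod_eq_small:
  fixes x y P :: int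
  assumes "0 \<le> x" "x < P" "0 \<le> y" "y < P" "(x - y) mod P = 0"
  shows "x = y"
proof -
  have "x mod P = y mod P" using assms(5) by (simp add: mod_eq_dvd_iff dvd_eq_mod_eq_0)
  thus ?thesis using assms by (simp add: mod_pos_pos_trivial)
qed

theorem lemma2p5:
  fixes p :: nat and T :: "(nat \<Rightarrow> int) set" and \<xi> :: "nat \<times> (nat \<Rightarrow> int)"
  assumes "prime p"
    and "finite T" and "T \<subseteq> Zp p" and "card T \<ge> 2"
    and "\<xi> \<in> Qp p"
    and "qp_abs p \<xi> > real p powr (real (gammaT p T) + 1)"
  shows "fourier_muT p T \<xi> \<noteq> 0"
proof -
  note p = assms(1)
  have p0: "p > 0" using p prime_gt_0_nat by blast
  have p1: "p > 1" using p prime_gt_1_nat by blast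
  obtain k w where xi: "\<xi> = (k, w)" by (cases \<xi>)
  have wZ: "w \<in> Zp p" using assms(5) unfolding xi Qp_def by simp
  define \<gamma> where "\<gamma> = gammaT p T"
  have w0: "w \<noteq> (\<lambda>_. 0)"
  proof
    assume "w = (\<lambda>_. 0)"
    hence "qp_abs p \<xi> = 0" unfolding xi qp_abs_def by simp
    moreover have "real p powr (real (gammaT p T) + 1) > 0" using p0 by simp
    ultimately show False using assms(6) by simp
  qed
  define v where "v = zp_val p w"
  have ex: "\<exists>n. w (Suc n) \<noteq> 0"
  proof -
    obtain m where wm: "w m \<noteq> 0" using w0 by auto
    show ?thesis
    proof (cases m)
      case 0 thus ?thesis using wm zp_0[OF wZ] by simp
    next
      case (Suc n) thus ?thesis using wm by blast
    qed
  qed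
  have wv1: "w (Suc v) \<noteq> 0" unfolding v_def zp_val_def using ex by (rule LeastI_ex)
  have wv0: "w v = 0"
  proof (cases v)
    case 0 thus ?thesis using zp_0[OF wZ] by simp
  next
    case (Suc i)
    have "i < v" using Suc by simp
    hence "\<not> w (Suc i) \<noteq> 0" unfolding v_def zp_val_def by (rule not_less_Least)
    thus ?thesis using Suc by simp
  qed
  have kv: "real k - real v > real \<gamma> + 1"
  proof -
    have "qp_abs p \<xi> = real p powr (real k - real v)" unfolding xi qp_abs_def v_def using w0 by simp
    hence "real p powr (real \<gamma> + 1) < real p powr (real k - real v)" using assms(6) unfolding \<gamma>_def by simp
    thus ?thesis using p1 by (simp add: powr_less_cancel_iff)
  qed
  hence kv': "k \<ge> v + \<gamma> + 2" by linarith
  define P where "P = p ^ k"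
  define N where "N = p ^ (k - 1)"
  obtain k' where k': "k = Suc k'" using kv' by (cases k) auto
  have PN: "P = p * N" unfolding P_def N_def k' by simp
  have P0: "int P > 0" unfolding P_def using p0 by simp
  have pv: "(int p) ^ v dvd w k"
  proof -
    have "w k mod (int p ^ v) = 0" using zp_mod[OF wZ, of v k] wv0 kv' by simp
    thus ?thesis by (simp add: dvd_eq_mod_eq_0)
  qed
  then obtain u where u: "w k = int p ^ v * u" by (rule dvdE)
  have pu: "\<not> int p dvd u"
  proof
    assume "int p dvd u"
    hence "int p ^ Suc v dvd w k" using u by (simp add: mult_dvd_mono)
    hence "w k mod (int p ^ Suc v) = 0" by (simp add: dvd_eq_mod_eq_0)
    moreover have "w k mod (int p ^ Suc v) = w (Suc v)" using zp_mod[OF wZ, of "Suc v" k] kv' by simp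
    ultimately show False using wv1 by simp
  qed
  define a where "a = (\<lambda>t::nat\<Rightarrow>int. nat ((t k * w k) mod int P))"
  have a_int: "int (a t) = (t k * w k) mod int P" for t unfolding a_def using P0 by simp
  have a_lt: "a t < P" for t
  proof -
    have "int (a t) < int P" unfolding a_int using P0 by simp
    thus ?thesis by simp
  qed
  have sep: "t = t'" if tT: "t \<in> T" "t' \<in> T" and am: "a t mod N = a t' mod N" for t t'
  proof (rule ccontr)
    assume tt: "t \<noteq> t'"
    have tZ: "t \<in> Zp p" "t' \<in> Zp p" using tT assms(3) by auto
    have "int (a t) mod int N = int (a t') mod int N" using am by (simp flip: of_nat_mod)
    hence "((t k * w k) mod int P) mod int N = ((t' k * w k) mod int P) mod int N" by (simp add: a_int)
    moreover have "int N dvd int P" unfolding PN by simp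
    ultimately have "(t k * w k) mod int N = (t' k * w k) mod int N" by (simp add: mod_mod_cancel)
    hence "int N dvd (t k - t' k) * w k" by (simp add: mod_eq_dvd_iff left_diff_distrib)
    moreover have "int N = int p ^ v * int p ^ (k - 1 - v)"
      unfolding N_def using kv' by (simp add: power_add[symmetric])
    ultimately have "int p ^ v * int p ^ (k - 1 - v) dvd int p ^ v * ((t k - t' k) * u)"
      using u by (simp add: mult.left_commute mult.commute)
    hence "int p ^ (k - 1 - v) dvd (t k - t' k) * u" using p0 by simp
    moreover have "algebraic_semidom_class.coprime (int p ^ (k - 1 - v)) u"
    proof -
      have "algebraic_semidom_class.coprime (int p) u"
        using prime_imp_coprime[of "int p" u] pu p by simp
      thus ?thesis by simp
    qed
    ultimately have "int p ^ (k - 1 - v) dvd t k - t' k" using coprime_dvd_mult_left_iff by blast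
    moreover have "int p ^ (\<gamma> + 1) dvd int p ^ (k - 1 - v)"
      by (rule le_imp_power_dvd) (use kv' in linarith)
    ultimately have "int p ^ (\<gamma> + 1) dvd t k - t' k" using dvd_trans by blast
    hence "t k mod int p ^ (\<gamma> + 1) = t' k mod int p ^ (\<gamma> + 1)" by (simp add: mod_eq_dvd_iff)
    hence tg: "t (\<gamma> + 1) = t' (\<gamma> + 1)" using zp_mod[OF tZ(1), of "\<gamma>+1" k] zp_mod[OF tZ(2), of "\<gamma>+1" k] kv' by simp
    define d where "d = zp_diff p t t'"
    have d0: "d (Suc i) = 0" if "i \<le> \<gamma>" for i
    proof -
      have "t (Suc i) = t (\<gamma> + 1) mod int p ^ Suc i" using zp_mod[OF tZ(1), of "Suc i" "\<gamma>+1"] that by simp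
      moreover have "t' (Suc i) = t' (\<gamma> + 1) mod int p ^ Suc i" using zp_mod[OF tZ(2), of "Suc i" "\<gamma>+1"] that by simp
      ultimately show ?thesis unfolding d_def zp_diff_def using tg by simp
    qed
    have exd: "\<exists>n. d (Suc n) \<noteq> 0"
    proof -
      obtain m where m: "t m \<noteq> t' m" using tt by auto
      obtain n where mn: "m = Suc n" using m zp_0[OF tZ(1)] zp_0[OF tZ(2)] by (cases m) auto
      have b1: "0 \<le> t m" "t m < int p ^ m" "0 \<le> t' m" "t' m < int p ^ m" using tZ unfolding Zp_def by auto
      have "d m \<noteq> 0" unfolding d_def zp_diff_def using mod_eq_small[OF b1] m by auto
      thus ?thesis using mn by auto
    qed
    have "d (Suc (zp_val p d)) \<noteq> 0" unfolding zp_val_def using exd by (rule LeastI_ex)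
    moreover have "zp_val p d \<le> \<gamma>"
    proof -
      let ?S = "{zp_val p (zp_diff p t t') | t t'. t \<in> T \<and> t' \<in> T \<and> t \<noteq> t'}"
      have "?S \<subseteq> (\<lambda>(t, t'). zp_val p (zp_diff p t t')) ` (T \<times> T)" by auto
      hence "finite ?S" by (rule finite_subset) (use assms(2) in simp)
      moreover have "zp_val p d \<in> ?S" unfolding d_def using tT tt by blast
      ultimately show ?thesis unfolding \<gamma>_def gammaT_def by (rule Max_ge)
    qed
    ultimately show False using d0 by blast
  qed
  define z where "z = exp (2 * complex_of_real pi * \<i> / of_nat P)"
  have zpow: "z ^ j = exp (2 * complex_of_real pi * \<i> * of_nat j / of_nat P)" for j
  proof -
    have "z ^ j = exp (of_nat j * (2 * complex_of_real pi * \<i> / of_nat P))"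
      unfolding z_def by (rule exp_of_nat_mult[symmetric])
    thus ?thesis by (simp add: field_simps)
  qed
  have P1: "1 \<le> P" using P0 by simp
  have zP: "z ^ (p * N) = 1" unfolding PN[symmetric] zpow by (subst complex_root_unity_eq_1[OF P1]) simp
  have zN: "z ^ N \<noteq> 1"
  proof -
    have N0: "N > 0" unfolding N_def using p0 by simp
    have "N < P" unfolding PN using p1 N0 by simp
    moreover note N0
    ultimately have "\<not> P dvd N" by (auto dest: dvd_imp_le)
    thus ?thesis unfolding zpow by (subst complex_root_unity_eq_1[OF P1]) simp
  qed
  have trm: "cnj (padic_chi p (zp_qp_mult p t \<xi>)) = cnj (z ^ a t)" for t
  proof -
    have "qp_frac p (zp_qp_mult p t \<xi>) = real (a t) / real P"
      unfolding xi zp_qp_mult_def qp_frac_def zp_mult_def P_def using a_int[of t]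
      by (simp add: P_def)
    hence "padic_chi p (zp_qp_mult p t \<xi>) = exp (2 * complex_of_real pi * \<i> * complex_of_real (real (a t) / real P))"
      unfolding padic_chi_def by simp
    also have "\<dots> = z ^ a t" unfolding zpow by simp
    finally show ?thesis by simp
  qed
  have inj: "inj_on a T" using sep by (intro inj_onI) simp
  have "fourier_muT p T \<xi> = cnj (\<Sum>t\<in>T. z ^ a t)" unfolding fourier_muT_def trm by simp
  also have "(\<Sum>t\<in>T. z ^ a t) = (\<Sum>b\<in>a ` T. z ^ b)" using inj by (simp add: sum.reindex)
  finally have F: "fourier_muT p T \<xi> = cnj (\<Sum>b\<in>a ` T. z ^ b)" .
  have "(\<Sum>b\<in>a ` T. z ^ b) \<noteq> 0"
  proof (rule keyK[OF p _ _ _ _ _ zP zN])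
    show "N = p ^ (k - 1)" by (rule N_def)
    show "finite (a ` T)" using assms(2) by simp
    show "a ` T \<noteq> {}" using assms(4) by auto
    show "\<forall>b\<in>a ` T. b < p * N" using a_lt PN by auto
    show "\<forall>b\<in>a ` T. \<forall>c\<in>a ` T. b mod N = c mod N \<longrightarrow> b = c" using sep by blast
  qed
  thus ?thesis unfolding F by (simp only: complex_cnj_zero_iff not_False_eq_True)
qed

end
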